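(* Fix a finite set $\Phi$ of $g$ groups and probabilities $p_{jk}\in[0,1]$ for $j,k\in\Phi$. For each $m$, let $V$ be a set of $m$ vertices, each assigned to a group by an arbitrary map $\varphi:V\to\Phi$, and let $\mathcal D$ be the random directed graph on $V$ in which each arc $(u,v)$, $u\ne v$, is present independently with probability $p_{\varphi(u)\varphi(v)}$. Let $\mathcal G$ be the undirected mutual-compatibility graph of $\mathcal D$ ($u,v$ adjacent iff both $(u,v)$ and $(v,u)$ are arcs). Then there is a constant $D>0$ depending only on $g$ and the $p_{jk}$ (not on $m$ or $\varphi$) such that $\mathbb E[\nu(\mathcal G)]\le D\log m$ for all $m\ge 2$, and $\Pr\big(\nu(\mathcal G)\le D\log m\big)\to 1$ as $m\to\infty$.
   Context: A set of odd cycles $\{c_1,\dots,c_l\}$ of an undirected graph is independent if the cycles are pairwise vertex-disjoint and no edge joins a vertex of $c_i$ to a vertex of $c_j$ for $i\ne j$; $\nu(\mathcal G)$ is the maximum size of an independent set of odd cycles of $\mathcal G$. *)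

theory Defs
  imports "HOL-Probability.Probability"
begin

text \<open>An odd cycle is recorded by its vertex set: a set C of vertices of V that can be listed
  as distinct vertices v_0, ..., v_(k-1), k odd, k at least 3, with consecutive vertices
  (cyclically) adjacent.\<close>

definition odd_cycle :: "'a set \<Rightarrow> ('a \<Rightarrow> 'a \<Rightarrow> bool) \<Rightarrow> 'a set \<Rightarrow> bool" where
  "odd_cycle V E C \<longleftrightarrow>
     (\<exists>xs. distinct xs \<and> odd (length xs) \<and> length xs \<ge> 3 \<and> set xs = C \<and> C \<subseteq> V \<and>
           (\<forall>i < length xs. E (xs ! i) (xs ! ((i + 1) mod length xs))))"

definition independent_odd_cycles :: "'a set \<Rightarrow> ('a \<Rightarrow> 'a \<Rightarrow> bool) \<Rightarrow> 'a set set \<Rightarrow> bool" where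
  "independent_odd_cycles V E F \<longleftrightarrow>
     (\<forall>C\<in>F. odd_cycle V E C) \<and>
     (\<forall>C\<in>F. \<forall>C'\<in>F. C \<noteq> C' \<longrightarrow> C \<inter> C' = {} \<and> (\<forall>u\<in>C. \<forall>v\<in>C'. \<not> E u v))"

definition nu :: "'a set \<Rightarrow> ('a \<Rightarrow> 'a \<Rightarrow> bool) \<Rightarrow> nat" where
  "nu V E = Max {card F | F. finite F \<and> independent_odd_cycles V E F}"

text \<open>Random directed graph on {0..<m}: arcs are a Boolean function on pairs; arc (u,v), u \<noteq> v,
  present independently with probability p (phi u) (phi v); no other arcs.\<close>
definition random_digraph :: "nat \<Rightarrow> (nat \<Rightarrow> 'g) \<Rightarrow> ('g \<Rightarrow> 'g \<Rightarrow> real) \<Rightarrow> (nat \<times> nat \<Rightarrow> bool) pmf" where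
  "random_digraph m phi p =
     Pi_pmf {(u, v). u < m \<and> v < m \<and> u \<noteq> v} False
       (\<lambda>(u, v). bernoulli_pmf (p (phi u) (phi v)))"

definition mutual_graph :: "(nat \<times> nat \<Rightarrow> bool) \<Rightarrow> nat \<Rightarrow> nat \<Rightarrow> bool" where
  "mutual_graph A u v \<longleftrightarrow> A (u, v) \<and> A (v, u)"

end

theory Submission
  imports Defs
begin


lemma map_pair_bind:
  "map_pmf h (pair_pmf P Q) = bind_pmf P (\<lambda>f. map_pmf (\<lambda>g. h (f,g)) Q)"
  by (simp add: pair_pmf_def map_bind_pmf bind_return_pmf map_pmf_def bind_assoc_pmf)

lemma L1:
  fixes q :: "'a \<times> 'a \<Rightarrow> real"
  assumes fin: "finite I" and KI: "K \<subseteq> I"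
    and sw: "\<And>a b. (a,b) \<in> K \<Longrightarrow> (b,a) \<in> I \<and> (b,a) \<notin> K"
    and q01: "\<And>x. 0 \<le> q x \<and> q x \<le> 1"
  shows "emeasure (Pi_pmf I False (\<lambda>x. bernoulli_pmf (q x))) {A. \<forall>(a,b)\<in>K. \<not>(A(a,b) \<and> A(b,a))}
     = (\<Prod>(a,b)\<in>K. ennreal (1 - q (a,b) * q (b,a)))"
proof -
  let ?B = "\<lambda>x. bernoulli_pmf (q x)"
  define J where "J = I - K"
  define h where "h = (\<lambda>(f::'a\<times>'a\<Rightarrow>bool, g::'a\<times>'a\<Rightarrow>bool) x. if x \<in> K then f x else g x)"
  define X where "X = {A. \<forall>(a,b)\<in>K. \<not>(A(a,b) \<and> A(b,a))}"
  have finK: "finite K" using fin KI finite_subset by blast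
  have finJ: "finite J" using fin J_def by simp
  have IKJ: "I = K \<union> J" using KI J_def by blast
  have "Pi_pmf I False ?B = map_pmf h (pair_pmf (Pi_pmf K False ?B) (Pi_pmf J False ?B))"
    unfolding IKJ h_def by (rule Pi_pmf_union) (use finK finJ J_def in auto)
  also have "\<dots> = bind_pmf (Pi_pmf K False ?B) (\<lambda>f. map_pmf (\<lambda>g. h (f,g)) (Pi_pmf J False ?B))"
    by (rule map_pair_bind)
  finally have eq: "Pi_pmf I False ?B = \<dots>" .
  define S where "S = (\<lambda>f x. if prod.swap x \<in> K \<and> f (prod.swap x) then {False} else (UNIV::bool set))"
  have pre: "(\<lambda>g. h (f,g)) -` X = Pi J (S f)" for f
  proof (intro set_eqI iffI)
    fix g assume "g \<in> (\<lambda>g. h (f,g)) -` X"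
    then have g: "\<forall>(a,b)\<in>K. \<not>(f(a,b) \<and> g(b,a))"
      using sw by (fastforce simp: X_def h_def)
    show "g \<in> Pi J (S f)"
      using g by (auto simp: S_def)
  next
    fix g assume g: "g \<in> Pi J (S f)"
    { fix a b assume ab: "(a,b) \<in> K" "f (a,b)" "g (b,a)"
      have "(b,a) \<in> J" using sw[OF ab(1)] J_def by auto
      then have "g (b,a) \<in> S f (b,a)" using g by auto
      with ab have False by (auto simp: S_def) }
    then show "g \<in> (\<lambda>g. h (f,g)) -` X"
      using sw by (fastforce simp: X_def h_def)
  qed
  have inner: "emeasure (map_pmf (\<lambda>g. h (f,g)) (Pi_pmf J False ?B)) X
     = (\<Prod>y\<in>K. ennreal (if f y then 1 - q (prod.swap y) else 1))" for f
  proof -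
    have "emeasure (map_pmf (\<lambda>g. h (f,g)) (Pi_pmf J False ?B)) X
        = ennreal (\<Prod>x\<in>J. measure_pmf.prob (?B x) (S f x))"
      by (simp add: pre measure_pmf.emeasure_eq_measure measure_Pi_pmf_Pi finJ)
    also have "(\<Prod>x\<in>J. measure_pmf.prob (?B x) (S f x))
       = (\<Prod>x\<in>prod.swap ` K. measure_pmf.prob (?B x) (S f x))"
    proof (rule prod.mono_neutral_right)
      show "finite J" by (rule finJ)
      show "prod.swap ` K \<subseteq> J" using sw J_def by force
      show "\<forall>i\<in>J - prod.swap ` K. measure_pmf.prob (?B i) (S f i) = 1"
      proof
        fix i assume i: "i \<in> J - prod.swap ` K"
        have "prod.swap i \<notin> K"
        proof
          assume "prod.swap i \<in> K"
          then have "prod.swap (prod.swap i) \<in> prod.swap ` K" by (rule imageI)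
          then show False using i by simp
        qed
        then show "measure_pmf.prob (?B i) (S f i) = 1" by (simp add: S_def)
      qed
    qed
    also have "\<dots> = (\<Prod>y\<in>K. measure_pmf.prob (?B (prod.swap y)) (S f (prod.swap y)))"
      by (subst prod.reindex) auto
    also have "\<dots> = (\<Prod>y\<in>K. (if f y then 1 - q (prod.swap y) else 1))"
      by (intro prod.cong refl) (auto simp: S_def measure_pmf_single q01)
    finally show ?thesis using q01
      by (simp add: prod_ennreal)
  qed
  have "emeasure (Pi_pmf I False ?B) X
     = (\<integral>\<^sup>+f. (\<Prod>y\<in>K. ennreal (if f y then 1 - q (prod.swap y) else 1)) \<partial>(Pi_pmf K False ?B))"
    unfolding eq emeasure_bind_pmf inner ..
  also have "\<dots> = (\<Prod>y\<in>K. \<integral>\<^sup>+b. ennreal (if b then 1 - q (prod.swap y) else 1) \<partial>(?B y))"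
    by (rule nn_integral_prod_Pi_pmf[OF finK])
  also have "\<dots> = (\<Prod>y\<in>K. ennreal (1 - q y * q (prod.swap y)))"
  proof (intro prod.cong refl)
    fix y assume "y \<in> K"
    have "(\<integral>\<^sup>+b. ennreal (if b then 1 - q (prod.swap y) else 1) \<partial>(?B y))
       = ennreal (1 - q (prod.swap y)) * q y + ennreal 1 * (1 - q y)"
      using q01 by (subst nn_integral_bernoulli_pmf) auto
    also have "\<dots> = ennreal (1 - q y * q (prod.swap y))"
    proof -
      have a: "0 \<le> q y" "q y \<le> 1" "0 \<le> q (prod.swap y)" "q (prod.swap y) \<le> 1"
        using q01[of y] q01[of "prod.swap y"] by auto
      have n2: "0 \<le> q y - q y * q (prod.swap y)"
        using mult_left_le[OF a(4) a(1)] by simp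
      have "ennreal (1 - q (prod.swap y)) * q y + ennreal 1 * (1 - q y)
           = ennreal ((1 - q (prod.swap y)) * q y) + ennreal (1 - q y)"
        using a by (simp add: ennreal_mult')
      also have "\<dots> = ennreal ((1 - q (prod.swap y)) * q y + (1 - q y))"
        using a n2 by (subst ennreal_plus) (auto simp: algebra_simps)
      also have "(1 - q (prod.swap y)) * q y + (1 - q y) = 1 - q y * q (prod.swap y)"
        by (simp add: algebra_simps)
      finally show ?thesis .
    qed
    finally show "(\<integral>\<^sup>+b. ennreal (if b then 1 - q (prod.swap y) else 1) \<partial>(?B y)) = ennreal (1 - q y * q (prod.swap y))" .
  qed
  finally show ?thesis unfolding X_def by (simp add: case_prod_unfold prod.swap_def)
qed



lemma odd_cycle_ne: "odd_cycle V E C \<Longrightarrow> C \<noteq> {} \<and> C \<subseteq> V"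
proof -
  assume "odd_cycle V E C"
  then obtain xs where xs: "length xs \<ge> 3" "set xs = C" "C \<subseteq> V" unfolding odd_cycle_def by blast
  have "xs \<noteq> []" using xs(1) by (metis list.size(3) not_numeral_le_zero)
  then have "set xs \<noteq> {}" by simp
  then show ?thesis using xs(2,3) by simp
qed

lemma indep_card_le:
  assumes "independent_odd_cycles {0..<m} E F"
  shows "card F \<le> m"
proof -
  define f where "f = (\<lambda>C::nat set. SOME x. x \<in> C)"
  have cyc: "odd_cycle {0..<m} E C" if "C \<in> F" for C
    using assms that unfolding independent_odd_cycles_def by blast
  have fC: "f C \<in> C" if "C \<in> F" for C
  proof -
    have "C \<noteq> {}" using odd_cycle_ne[OF cyc[OF that]] by blast
    then show ?thesis unfolding f_def by (simp add: some_in_eq)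
  qed
  have inj: "inj_on f F"
  proof
    fix C C' assume CC: "C \<in> F" "C' \<in> F" "f C = f C'"
    show "C = C'"
    proof (rule ccontr)
      assume "C \<noteq> C'"
      then have "C \<inter> C' = {}" using assms CC(1,2) unfolding independent_odd_cycles_def by blast
      then show False using fC[OF CC(1)] fC[OF CC(2)] CC(3) by auto
    qed
  qed
  have sub: "f ` F \<subseteq> {0..<m}"
  proof
    fix x assume "x \<in> f ` F"
    then obtain C where "C \<in> F" "x = f C" by blast
    then show "x \<in> {0..<m}" using fC odd_cycle_ne[OF cyc] by blast
  qed
  have "card F = card (f ` F)" using inj by (simp add: card_image)
  also have "\<dots> \<le> card {0..<m}" by (rule card_mono[OF _ sub]) simp
  finally show ?thesis by simp
qed

lemma nu_facts:
  shows "nu {0..<m} E \<le> m"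
    and "\<exists>F. finite F \<and> independent_odd_cycles {0..<m} E F \<and> card F = nu {0..<m} E"
proof -
  let ?S = "{card F | F. finite F \<and> independent_odd_cycles {0..<m} E F}"
  have sub: "?S \<subseteq> {..m}" using indep_card_le by auto
  have fin: "finite ?S" using finite_subset[OF sub] by simp
  have "independent_odd_cycles {0..<m} E {}" by (simp add: independent_odd_cycles_def)
  then have ne: "?S \<noteq> {}" by blast
  have "Max ?S \<in> ?S" using fin ne by (rule Max_in)
  then show "\<exists>F. finite F \<and> independent_odd_cycles {0..<m} E F \<and> card F = nu {0..<m} E"
    unfolding nu_def by auto
  show "nu {0..<m} E \<le> m" unfolding nu_def using fin ne sub by (auto intro!: Max.boundedI)
qed

definition goodset :: "nat \<Rightarrow> (nat \<Rightarrow> 'g) \<Rightarrow> nat \<Rightarrow> (nat list \<times> nat list) set" where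
  "goodset m phi s = {(us,vs). length us = s \<and> length vs = s \<and> set us \<subseteq> {..<m} \<and> set vs \<subseteq> {..<m} \<and>
      (\<forall>i<s. \<forall>i'<s. us!i \<noteq> vs!i' \<and> (i \<noteq> i' \<longrightarrow> us!i \<noteq> us!i' \<and> vs!i \<noteq> vs!i')) \<and>
      (\<forall>i<s. phi (us!i) = phi (us!0) \<and> phi (vs!i) = phi (vs!0))}"

definition evt :: "nat \<Rightarrow> nat list \<Rightarrow> nat list \<Rightarrow> (nat \<times> nat \<Rightarrow> bool) set" where
  "evt s us vs = {A. mutual_graph A (us!0) (vs!0) \<and>
      (\<forall>i<s. \<forall>i'<s. i \<noteq> i' \<longrightarrow> \<not> mutual_graph A (us!i) (vs!i'))}"

lemma good_card: "finite (goodset m phi s) \<and> card (goodset m phi s) \<le> m ^ (2 * s)"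
proof -
  define L where "L = {xs. set xs \<subseteq> {..<m} \<and> length xs = s}"
  have finL: "finite L" unfolding L_def by (rule finite_lists_length_eq) simp
  have cL: "card L = m ^ s" unfolding L_def by (simp add: card_lists_length_eq)
  have sub: "goodset m phi s \<subseteq> L \<times> L" unfolding goodset_def L_def by auto
  have "card (goodset m phi s) \<le> card (L \<times> L)" by (rule card_mono) (use finL sub in auto)
  also have "\<dots> = m ^ (2 * s)" by (simp add: card_cartesian_product cL power_add mult_2 power_mult)
  finally show ?thesis using finite_subset[OF sub] finL by auto
qed

lemma det:
  fixes phi :: "nat \<Rightarrow> 'g::finite"
  assumes F: "finite F" "independent_odd_cycles {0..<m} (mutual_graph A) F"
    and cF: "card F > CARD('g) * CARD('g) * (s - 1)" and s: "s \<ge> 1"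
  shows "\<exists>(us,vs)\<in>goodset m phi s. A \<in> evt s us vs"
proof -
  let ?E = "mutual_graph A"
  define P where "P = (\<lambda>C pr. \<exists>xs. distinct xs \<and> length xs \<ge> 3 \<and> set xs = C \<and>
       (\<forall>i < length xs. ?E (xs ! i) (xs ! ((i + 1) mod length xs))) \<and> pr = (xs!0, xs!1))"
  define rep where "rep = (\<lambda>C. SOME pr. P C pr)"
  have repP: "P C (rep C)" if "C \<in> F" for C
  proof -
    have "odd_cycle {0..<m} ?E C" using F that unfolding independent_odd_cycles_def by blast
    then obtain xs where "distinct xs \<and> length xs \<ge> 3 \<and> set xs = C \<and>
       (\<forall>i < length xs. ?E (xs ! i) (xs ! ((i + 1) mod length xs)))"
      unfolding odd_cycle_def by blast
    then have "P C (xs!0, xs!1)" unfolding P_def by blast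
    then show ?thesis unfolding rep_def by (rule someI)
  qed
  have rep: "fst (rep C) \<in> C \<and> snd (rep C) \<in> C \<and> fst (rep C) \<noteq> snd (rep C) \<and> ?E (fst (rep C)) (snd (rep C))"
    if C: "C \<in> F" for C
  proof -
    obtain xs where xs: "distinct xs" "length xs \<ge> 3" "set xs = C"
       "\<forall>i < length xs. ?E (xs ! i) (xs ! ((i + 1) mod length xs))" "rep C = (xs!0, xs!1)"
      using repP[OF C] unfolding P_def by blast
    have l0: "0 < length xs" using xs(2) by linarith
    have "?E (xs!0) (xs!((0+1) mod length xs))" using xs(4)[rule_format, OF l0] .
    moreover have "(0+1) mod length xs = 1" using xs(2) by simp
    ultimately have "?E (xs!0) (xs!1)" by simp
    moreover have "xs!0 \<noteq> xs!1" using nth_eq_iff_index_eq[OF xs(1), of 0 1] xs(2) l0 by (simp del: length_greater_0_conv)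
    moreover have "xs!0 \<in> C" "xs!1 \<in> C"
    proof -
      have l1: "1 < length xs" using xs(2) by linarith
      show "xs!0 \<in> C" using nth_mem[OF l0] xs(3) by simp
      show "xs!1 \<in> C" using nth_mem[OF l1] xs(3) by simp
    qed
    ultimately show ?thesis using xs(5) by auto
  qed
  define ty where "ty = (\<lambda>C. (phi (fst (rep C)), phi (snd (rep C))))"
  define fib where "fib = (\<lambda>t. {C\<in>F. ty C = t})"
  have "\<exists>t. card (fib t) \<ge> s"
  proof (rule ccontr)
    assume "\<not> ?thesis"
    then have lt0: "card (fib t) < s" for t
    proof -
      assume nt: "\<not> (\<exists>t. s \<le> card (fib t))"
      show "card (fib t) < s"
      proof (rule ccontr)
        assume "\<not> card (fib t) < s"
        then have "s \<le> card (fib t)" by simp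
        then show False using nt by blast
      qed
    qed
    have lt: "card (fib t) \<le> s - 1" for t using lt0[of t] by arith
    have "F = (\<Union>t\<in>UNIV. fib t)" unfolding fib_def by auto
    moreover have "card (\<Union>t\<in>UNIV. fib t) \<le> (\<Sum>t\<in>(UNIV::('g\<times>'g) set). card (fib t))"
      by (rule card_UN_le) simp
    ultimately have "card F \<le> (\<Sum>t\<in>(UNIV::('g\<times>'g) set). card (fib t))" by simp
    also have "\<dots> \<le> (\<Sum>t\<in>(UNIV::('g\<times>'g) set). s - 1)" by (rule sum_mono) (rule lt)
    also have "\<dots> = CARD('g) * CARD('g) * (s - 1)"
    proof -
      have "card (UNIV::('g\<times>'g) set) = CARD('g) * CARD('g)"
        by (rule card_prod)
      then show ?thesis by simp
    qed
    finally show False using cF by simp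
  qed
  then obtain t where t: "card (fib t) \<ge> s" by blast
  obtain F' where F': "F' \<subseteq> fib t" "card F' = s"
    using obtain_subset_with_card_n[OF t] by blast
  have fibF: "fib t \<subseteq> F" unfolding fib_def by blast
  have finF': "finite F'" using finite_subset[OF subset_trans[OF F'(1) fibF] F(1)] .
  obtain cs where cs: "distinct cs" "set cs = F'" using finite_distinct_list[OF finF'] by blast
  have lcs: "length cs = s" using distinct_card[OF cs(1)] cs(2) F'(2) by simp
  have csF: "cs!i \<in> F" "ty (cs!i) = t" if "i < s" for i
  proof -
    have "cs!i \<in> F'" using nth_mem[of i cs] cs(2) lcs that by simp
    then show "cs!i \<in> F" "ty (cs!i) = t" using F'(1) unfolding fib_def by auto
  qed
  have csD: "cs!i \<noteq> cs!i'" if "i<s" "i'<s" "i\<noteq>i'" for i i'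
    using nth_eq_iff_index_eq[OF cs(1)] lcs that by simp
  define us where "us = map (fst \<circ> rep) cs"
  define vs where "vs = map (snd \<circ> rep) cs"
  have lus: "length us = s" "length vs = s" using lcs us_def vs_def by auto
  have usi: "us!i = fst (rep (cs!i))" "vs!i = snd (rep (cs!i))" if "i<s" for i
    using that lcs us_def vs_def by auto
  have inC: "us!i \<in> cs!i" "vs!i \<in> cs!i" "us!i \<noteq> vs!i" "?E (us!i) (vs!i)" if "i<s" for i
    using usi[OF that] rep[OF csF(1)[OF that]] by auto
  have indep: "C \<inter> C' = {} \<and> (\<forall>u\<in>C. \<forall>v\<in>C'. \<not> ?E u v)" if "C\<in>F" "C'\<in>F" "C\<noteq>C'" for C C'
    using F(2) that unfolding independent_odd_cycles_def by blast
  have disj: "cs!i \<inter> cs!i' = {}" "\<forall>u\<in>cs!i. \<forall>v\<in>cs!i'. \<not> ?E u v"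
    if "i<s" "i'<s" "i\<noteq>i'" for i i'
    using indep[OF csF(1)[OF that(1)] csF(1)[OF that(2)] csD[OF that]] by auto
  have Vsub: "C \<subseteq> {0..<m}" if "C \<in> F" for C
  proof -
    have "odd_cycle {0..<m} ?E C" using F(2) that unfolding independent_odd_cycles_def by blast
    then show ?thesis using odd_cycle_ne by blast
  qed
  have lt: "us!i < m" "vs!i < m" if "i < s" for i
    using inC[OF that] Vsub[OF csF(1)[OF that]] by auto
  have P1: "set us \<subseteq> {..<m}"
  proof
    fix x assume "x \<in> set us"
    then obtain i where "i < s" "x = us!i" using lus by (auto simp: in_set_conv_nth)
    then show "x \<in> {..<m}" using lt by auto
  qed
  have P2: "set vs \<subseteq> {..<m}"
  proof
    fix x assume "x \<in> set vs"
    then obtain i where "i < s" "x = vs!i" using lus by (auto simp: in_set_conv_nth)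
    then show "x \<in> {..<m}" using lt by auto
  qed
  have P3a: "us!i \<noteq> vs!i'" if ii: "i < s" "i' < s" for i i'
  proof (cases "i = i'")
    case True then show ?thesis using inC(3)[OF ii(1)] by simp
  next
    case False
    show ?thesis
    proof
      assume eq: "us!i = vs!i'"
      have "us!i \<in> cs!i \<inter> cs!i'" using inC(1)[OF ii(1)] inC(2)[OF ii(2)] eq by simp
      then show False using disj(1)[OF ii False] by simp
    qed
  qed
  have P3b: "us!i \<noteq> us!i' \<and> vs!i \<noteq> vs!i'" if ii: "i < s" "i' < s" "i \<noteq> i'" for i i'
  proof
    show "us!i \<noteq> us!i'"
    proof
      assume eq: "us!i = us!i'"
      have "us!i \<in> cs!i \<inter> cs!i'" using inC(1)[OF ii(1)] inC(1)[OF ii(2)] eq by simp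
      then show False using disj(1)[OF ii] by simp
    qed
    show "vs!i \<noteq> vs!i'"
    proof
      assume eq: "vs!i = vs!i'"
      have "vs!i \<in> cs!i \<inter> cs!i'" using inC(2)[OF ii(1)] inC(2)[OF ii(2)] eq by simp
      then show False using disj(1)[OF ii] by simp
    qed
  qed
  have P4: "phi (us!i) = phi (us!0) \<and> phi (vs!i) = phi (vs!0)" if ii: "i < s" for i
  proof -
    have s0: "0 < s" using s by simp
    have "ty (cs!i) = ty (cs!0)" using csF(2)[OF ii] csF(2)[OF s0] by simp
    then show ?thesis
      using usi[OF ii] usi[OF s0] unfolding ty_def by simp
  qed
  have g: "(us,vs) \<in> goodset m phi s"
    unfolding goodset_def mem_Collect_eq case_prod_conv
    using lus P1 P2 P3a P3b P4 by blast
  have "A \<in> evt s us vs"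
    unfolding evt_def
  proof (intro CollectI conjI allI impI)
    have "0 < s" using s by simp
    then show "?E (us!0) (vs!0)" by (rule inC(4))
  next
    fix i i' assume ii: "i < s" "i' < s" "i \<noteq> i'"
    have "us!i \<in> cs!i" "vs!i' \<in> cs!i'" using inC(1)[OF ii(1)] inC(2)[OF ii(2)] by simp_all
    then show "\<not> ?E (us!i) (vs!i')" using disj(2)[OF ii] by simp
  qed
  then show ?thesis using g by (intro bexI[of _ "(us,vs)"]) simp_all
qed



lemma goodsetD:
  assumes "(us,vs) \<in> goodset m phi s"
  shows "length us = s" "length vs = s" "set us \<subseteq> {..<m}" "set vs \<subseteq> {..<m}"
      "\<forall>i<s. \<forall>i'<s. us!i \<noteq> vs!i' \<and> (i \<noteq> i' \<longrightarrow> us!i \<noteq> us!i' \<and> vs!i \<noteq> vs!i')"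
      "\<forall>i<s. phi (us!i) = phi (us!0) \<and> phi (vs!i) = phi (vs!0)"
  using assms unfolding goodset_def mem_Collect_eq case_prod_conv by blast+
lemma rd_alt: "random_digraph m phi p =
   Pi_pmf {(u, v). u < m \<and> v < m \<and> u \<noteq> v} False (\<lambda>x. bernoulli_pmf ((\<lambda>(u,v). p (phi u) (phi v)) x))"
  unfolding random_digraph_def by (simp add: case_prod_unfold)

lemma prob_single:
  assumes p01: "\<And>j k. 0 \<le> p j k \<and> p j k \<le> 1"
    and uv: "u < m" "v < m" "u \<noteq> v"
  shows "measure_pmf.prob (random_digraph m phi p) {A. A (u,v)} = p (phi u) (phi v)"
proof -
  let ?I = "{(u, v). u < m \<and> v < m \<and> u \<noteq> v}"
  have fin: "finite ?I" by (rule finite_subset[of _ "{..<m} \<times> {..<m}"]) auto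
  have "{A. A (u,v)} = (\<lambda>A. A (u,v)) -` {True}" by auto
  then have "measure_pmf.prob (random_digraph m phi p) {A. A (u,v)}
     = measure_pmf.prob (map_pmf (\<lambda>A. A (u,v)) (random_digraph m phi p)) {True}" by simp
  also have "map_pmf (\<lambda>A. A (u,v)) (random_digraph m phi p) = bernoulli_pmf (p (phi u) (phi v))"
    unfolding random_digraph_def using uv fin by (subst Pi_pmf_component) auto
  also have "measure_pmf.prob (bernoulli_pmf (p (phi u) (phi v))) {True} = p (phi u) (phi v)"
    using p01 by (simp add: measure_pmf_single)
  finally show ?thesis .
qed

lemma card_off: "card {(i,i'). i < s \<and> i' < s \<and> i \<noteq> (i'::nat)} = s * (s - 1)"
proof -
  have eq: "{(i,i'). i < s \<and> i' < s \<and> i \<noteq> (i'::nat)} = {..<s} \<times> {..<s} - (\<lambda>i. (i,i)) ` {..<s}"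
    by auto
  have "card ((\<lambda>i. (i,i)) ` {..<s}) = s" by (subst card_image) (auto simp: inj_on_def)
  then have "card ({..<s} \<times> {..<s} - (\<lambda>i. (i,i)) ` {..<s}) = s * s - s"
    by (subst card_Diff_subset) (auto simp: card_cartesian_product)
  then show ?thesis unfolding eq by (simp add: diff_mult_distrib2)
qed

lemma prob_evt_Q:
  assumes p01: "\<And>j k. 0 \<le> p j k \<and> p j k \<le> 1"
    and g: "(us,vs) \<in> goodset m phi s" and s: "s \<ge> 1"
  shows "measure_pmf.prob (random_digraph m phi p) (evt s us vs)
     \<le> (1 - p (phi (us!0)) (phi (vs!0)) * p (phi (vs!0)) (phi (us!0))) ^ (s * (s - 1))"
proof -
  let ?I = "{(u, v). u < m \<and> v < m \<and> u \<noteq> v}"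
  define q where "q = (\<lambda>(u,v). p (phi u) (phi v))"
  define Q where "Q = p (phi (us!0)) (phi (vs!0)) * p (phi (vs!0)) (phi (us!0))"
  define Off where "Off = {(i,i'). i < s \<and> i' < s \<and> i \<noteq> (i'::nat)}"
  define K where "K = (\<lambda>(i,i'). (us!i, vs!i')) ` Off"
  have fin: "finite ?I" by (rule finite_subset[of _ "{..<m} \<times> {..<m}"]) auto
  have GA: "length us = s" "length vs = s" "set us \<subseteq> {..<m}" "set vs \<subseteq> {..<m}"
      "\<forall>i<s. \<forall>i'<s. us!i \<noteq> vs!i' \<and> (i \<noteq> i' \<longrightarrow> us!i \<noteq> us!i' \<and> vs!i \<noteq> vs!i')"
      "\<forall>i<s. phi (us!i) = phi (us!0) \<and> phi (vs!i) = phi (vs!0)"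
    using goodsetD[OF g] by blast+
  have G5: "us!i \<noteq> vs!i'" if "i<s" "i'<s" for i i' using GA(5) that by blast
  have G6: "us!i \<noteq> us!i' \<and> vs!i \<noteq> vs!i'" if "i<s" "i'<s" "i \<noteq> i'" for i i' using GA(5) that by blast
  have G7: "phi (us!i) = phi (us!0) \<and> phi (vs!i) = phi (vs!0)" if "i<s" for i using GA(6) that by blast
  note G = GA(1-4) G5 G6 G7
  have ltm: "us!i < m" "vs!i < m" if "i < s" for i
  proof -
    have "us!i \<in> set us" by (rule nth_mem) (simp add: G(1) that)
    moreover have "vs!i \<in> set vs" by (rule nth_mem) (simp add: G(2) that)
    ultimately show "us!i < m" "vs!i < m" using G(3,4) by auto
  qed
  have KI: "K \<subseteq> ?I"
  proof
    fix x assume "x \<in> K"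
    then obtain i i' where ii: "i < s" "i' < s" "x = (us!i, vs!i')" unfolding K_def Off_def by auto
    then show "x \<in> ?I" using ltm[OF ii(1)] ltm[OF ii(2)] G5[OF ii(1,2)] by simp
  qed
  have sw: "(b,a) \<in> ?I \<and> (b,a) \<notin> K" if "(a,b) \<in> K" for a b
  proof -
    from that obtain i i' where ii: "i < s" "i' < s" "i \<noteq> i'" "a = us!i" "b = vs!i'"
      unfolding K_def Off_def by auto
    have "(b,a) \<notin> K"
    proof
      assume "(b,a) \<in> K"
      then obtain l l' where "l < s" "l' < s" "b = us!l" unfolding K_def Off_def by auto
      then show False using G(5)[of l i'] ii by simp
    qed
    then show ?thesis using KI that by auto
  qed
  have q01: "0 \<le> q x \<and> q x \<le> 1" for x using p01 unfolding q_def by (auto simp: case_prod_unfold)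
  have sub: "evt s us vs \<subseteq> {A. \<forall>(a,b)\<in>K. \<not>(A(a,b) \<and> A(b,a))}"
    unfolding evt_def K_def Off_def mutual_graph_def by auto
  have inj: "inj_on (\<lambda>(i,i'). (us!i, vs!i')) Off"
  proof (rule inj_onI)
    fix x y assume xy: "x \<in> Off" "y \<in> Off" "(\<lambda>(i,i'). (us!i, vs!i')) x = (\<lambda>(i,i'). (us!i, vs!i')) y"
    obtain a b c d where abcd: "x = (a,b)" "y = (c,d)" by (cases x, cases y) 
    have r: "a < s" "b < s" "c < s" "d < s" "us!a = us!c" "vs!b = vs!d"
      using xy abcd unfolding Off_def by auto
    have "a = c" using G(6)[OF r(1) r(3)] r(5) by blast
    moreover have "b = d" using G(6)[OF r(2) r(4)] r(6) by blast
    ultimately show "x = y" using abcd by simp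
  qed
  have cK: "card K = s * (s - 1)" unfolding K_def using card_off inj Off_def by (simp add: card_image)
  have fac: "(case x of (a,b) \<Rightarrow> ennreal (1 - q (a,b) * q (b,a))) = ennreal (1 - Q)" if "x \<in> K" for x
  proof -
    from that obtain i i' where ii: "i < s" "i' < s" "x = (us!i, vs!i')"
      unfolding K_def Off_def by auto
    then show ?thesis using G(7)[OF ii(1)] G(7)[OF ii(2)] unfolding q_def Q_def by simp
  qed
  have "emeasure (random_digraph m phi p) {A. \<forall>(a,b)\<in>K. \<not>(A(a,b) \<and> A(b,a))}
      = (\<Prod>(a,b)\<in>K. ennreal (1 - q (a,b) * q (b,a)))"
    unfolding rd_alt q_def[symmetric] by (rule L1[OF fin KI sw q01])
  also have "\<dots> = (\<Prod>x\<in>K. ennreal (1 - Q))" by (rule prod.cong[OF refl fac])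
  also have "\<dots> = ennreal ((1 - Q) ^ (s * (s - 1)))"
    using cK p01 unfolding Q_def by (simp add: ennreal_power mult_le_one)
  finally have em: "emeasure (random_digraph m phi p) {A. \<forall>(a,b)\<in>K. \<not>(A(a,b) \<and> A(b,a))}
      = ennreal ((1 - Q) ^ (s * (s - 1)))" .
  have Q1: "0 \<le> 1 - Q" using p01 unfolding Q_def by (simp add: mult_le_one)
  have "measure_pmf.prob (random_digraph m phi p) {A. \<forall>(a,b)\<in>K. \<not>(A(a,b) \<and> A(b,a))}
      = (1 - Q) ^ (s * (s - 1))"
    using em Q1 by (simp add: measure_pmf.emeasure_eq_measure)
  moreover have "measure_pmf.prob (random_digraph m phi p) (evt s us vs)
     \<le> measure_pmf.prob (random_digraph m phi p) {A. \<forall>(a,b)\<in>K. \<not>(A(a,b) \<and> A(b,a))}"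
    by (rule measure_pmf.finite_measure_mono[OF sub]) simp
  ultimately show ?thesis unfolding Q_def by simp
qed

lemma prob_evt_r:
  assumes p01: "\<And>j k. 0 \<le> p j k \<and> p j k \<le> 1"
    and r: "\<And>j k. 0 < p j k * p k j \<Longrightarrow> 1 - p j k * p k j \<le> r" "0 \<le> r"
    and g: "(us,vs) \<in> goodset m phi s" and s: "s \<ge> 1"
  shows "measure_pmf.prob (random_digraph m phi p) (evt s us vs) \<le> r ^ (s * (s - 1))"
proof -
  let ?j = "phi (us!0)" and ?k = "phi (vs!0)"
  have G: "length us = s" "length vs = s" "set us \<subseteq> {..<m}" "set vs \<subseteq> {..<m}"
      "\<forall>i<s. \<forall>i'<s. us!i \<noteq> vs!i' \<and> (i \<noteq> i' \<longrightarrow> us!i \<noteq> us!i' \<and> vs!i \<noteq> vs!i')"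
    using goodsetD[OF g] by blast+
  have s0: "0 < s" using s by simp
  have m1: "us!0 \<in> set us" by (rule nth_mem) (simp add: G(1) s0)
  have m2: "vs!0 \<in> set vs" by (rule nth_mem) (simp add: G(2) s0)
  have uv: "us!0 < m" "vs!0 < m" "us!0 \<noteq> vs!0" "vs!0 \<noteq> us!0"
  proof -
    have "us!0 \<noteq> vs!0" using G(5) s0 by blast
    then show "us!0 < m" "vs!0 < m" "us!0 \<noteq> vs!0" "vs!0 \<noteq> us!0" using m1 m2 G(3,4) by auto
  qed
  show ?thesis
  proof (cases "0 < p ?j ?k * p ?k ?j")
    case True
    have "measure_pmf.prob (random_digraph m phi p) (evt s us vs) \<le> (1 - p ?j ?k * p ?k ?j) ^ (s * (s - 1))"
      by (rule prob_evt_Q[OF p01 g s])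
    also have "\<dots> \<le> r ^ (s * (s - 1))"
      by (rule power_mono[OF r(1)[OF True]]) (use p01 in \<open>simp add: mult_le_one\<close>)
    finally show ?thesis .
  next
    case False
    have "0 \<le> p ?j ?k * p ?k ?j" using p01 by (simp add: mult_nonneg_nonneg)
    then have "p ?j ?k * p ?k ?j = 0" using False by linarith
    then have z: "p ?j ?k = 0 \<or> p ?k ?j = 0" by simp
    have s1: "evt s us vs \<subseteq> {A. A (us!0, vs!0)}" "evt s us vs \<subseteq> {A. A (vs!0, us!0)}"
      unfolding evt_def mutual_graph_def by auto
    have "measure_pmf.prob (random_digraph m phi p) (evt s us vs) \<le> 0"
      using z
    proof
      assume "p ?j ?k = 0"
      moreover have "measure_pmf.prob (random_digraph m phi p) (evt s us vs) \<le> measure_pmf.prob (random_digraph m phi p) {A. A (us!0, vs!0)}"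
        by (rule measure_pmf.finite_measure_mono[OF s1(1)]) simp
      ultimately show ?thesis using prob_single[where p=p and phi=phi, OF p01 uv(1,2,3)] by simp
    next
      assume "p ?k ?j = 0"
      moreover have "measure_pmf.prob (random_digraph m phi p) (evt s us vs) \<le> measure_pmf.prob (random_digraph m phi p) {A. A (vs!0, us!0)}"
        by (rule measure_pmf.finite_measure_mono[OF s1(2)]) simp
      ultimately show ?thesis using prob_single[where p=p and phi=phi, OF p01 uv(2,1,4)] by simp
    qed
    then show ?thesis using r(2) by (meson order_trans zero_le_power)
  qed
qed



lemma tail:
  fixes phi :: "nat \<Rightarrow> 'g::finite"
  assumes p01: "\<And>j k. 0 \<le> p j k \<and> p j k \<le> 1"
    and r: "\<And>j k. 0 < p j k * p k j \<Longrightarrow> 1 - p j k * p k j \<le> r" "0 \<le> r"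
    and s: "s \<ge> 1"
  shows "measure_pmf.prob (random_digraph m phi p)
           {A. CARD('g) * CARD('g) * (s - 1) < nu {0..<m} (mutual_graph A)}
         \<le> real m ^ (2 * s) * r ^ (s * (s - 1))"
proof -
  let ?M = "random_digraph m phi p"
  let ?S = "goodset m phi s"
  define Ev where "Ev = (\<lambda>x. evt s (fst x) (snd x))"
  have sub: "{A. CARD('g) * CARD('g) * (s - 1) < nu {0..<m} (mutual_graph A)} \<subseteq> (\<Union>x\<in>?S. Ev x)"
  proof
    fix A assume "A \<in> {A. CARD('g) * CARD('g) * (s - 1) < nu {0..<m} (mutual_graph A)}"
    then have lt: "CARD('g) * CARD('g) * (s - 1) < nu {0..<m} (mutual_graph A)" by simp
    obtain F where F: "finite F" "independent_odd_cycles {0..<m} (mutual_graph A) F"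
        "card F = nu {0..<m} (mutual_graph A)"
      using nu_facts(2) by blast
    have "\<exists>(us,vs)\<in>?S. A \<in> evt s us vs"
      by (rule det[OF F(1,2) _ s]) (use lt F(3) in simp)
    then obtain x where x: "x \<in> ?S" "case x of (us,vs) \<Rightarrow> A \<in> evt s us vs" by blast
    have "A \<in> Ev x" using x(2) unfolding Ev_def by (simp add: case_prod_unfold)
    then show "A \<in> (\<Union>x\<in>?S. Ev x)" using x(1) by blast
  qed
  have fin: "finite ?S" and cS: "card ?S \<le> m ^ (2 * s)" using good_card by auto
  have "measure_pmf.prob ?M {A. CARD('g) * CARD('g) * (s - 1) < nu {0..<m} (mutual_graph A)}
      \<le> measure_pmf.prob ?M (\<Union>x\<in>?S. Ev x)"
    by (rule measure_pmf.finite_measure_mono[OF sub]) simp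
  also have "\<dots> \<le> (\<Sum>x\<in>?S. measure_pmf.prob ?M (Ev x))"
    by (rule measure_pmf.finite_measure_subadditive_finite[OF fin]) simp
  also have "\<dots> \<le> real (card ?S) * r ^ (s * (s - 1))"
  proof (rule sum_bounded_above)
    fix x assume "x \<in> ?S"
    then have gx: "(fst x, snd x) \<in> ?S" by simp
    have "measure_pmf.prob ?M (evt s (fst x) (snd x)) \<le> r ^ (s * (s - 1))"
      using prob_evt_r[where p=p and phi=phi, OF p01 r(1) r(2) gx s] .
    then show "measure_pmf.prob ?M (Ev x) \<le> r ^ (s * (s - 1))"
      unfolding Ev_def .
  qed
  also have "\<dots> \<le> real m ^ (2 * s) * r ^ (s * (s - 1))"
  proof (rule mult_right_mono)
    show "real (card ?S) \<le> real m ^ (2 * s)" using cS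
      by (metis of_nat_le_iff of_nat_power)
    show "0 \<le> r ^ (s * (s - 1))" using r(2) by simp
  qed
  finally show ?thesis .
qed

lemma ln_ge_half: assumes "(2::real) \<le> x" shows "1/2 \<le> ln x"
proof -
  have "ln (1/2::real) \<le> 1/2 - 1" by (rule ln_le_minus_one) simp
  then have "1/2 \<le> ln (2::real)" by (simp add: ln_div)
  also have "ln 2 \<le> ln x" using assms by simp
  finally show ?thesis .
qed

lemma arith_bound:
  fixes x r :: real
  assumes x: "2 \<le> x" and r: "0 < r" "r < 1"
    and s_def: "s = nat \<lceil>3 * ln x / (- ln r)\<rceil> + 2"
  shows "x ^ (2 * s) * r ^ (s * (s - 1)) \<le> 1 / x ^ 2"
proof -
  define c where "c = - ln r"
  have c: "0 < c" unfolding c_def using r by simp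
  have L: "0 < ln x" using x by simp
  define t where "t = s - 1"
  have t: "real t \<ge> 3 * ln x / c" unfolding t_def s_def c_def by linarith
  have ts: "s = t + 1" unfolding t_def s_def by simp
  have "real t * c \<ge> 3 * ln x" using t c by (simp add: field_simps)
  have "r ^ t = exp (real t * ln r)" using r by (simp add: exp_of_nat_mult)
  also have "\<dots> \<le> exp (- (3 * ln x))" using \<open>real t * c \<ge> 3 * ln x\<close> unfolding c_def by simp
  also have "\<dots> = 1 / x ^ 3"
  proof -
    have "exp (3 * ln x) = x ^ 3" using x by (simp add: exp_of_nat_mult[of 3, simplified])
    then show ?thesis by (simp add: exp_minus field_simps)
  qed
  finally have rt: "r ^ t \<le> 1 / x ^ 3" .
  have "r ^ (s * (s - 1)) = r ^ ((s - 1) * s)" by (simp only: mult.commute)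
  also have "\<dots> = (r ^ t) ^ s" unfolding t_def by (rule power_mult)
  also have "\<dots> \<le> (1 / x ^ 3) ^ s" by (rule power_mono[OF rt]) (use r in simp)
  finally have rs: "r ^ (s * (s - 1)) \<le> (1 / x ^ 3) ^ s" .
  then have "x ^ (2 * s) * r ^ (s * (s - 1)) \<le> x ^ (2 * s) * (1 / x ^ 3) ^ s"
    using x by (intro mult_left_mono) auto
  also have "\<dots> = 1 / x ^ s"
  proof -
    have "x ^ (2 * s) * (1 / x ^ 3) ^ s = x ^ (2 * s) / x ^ (3 * s)"
      by (simp add: power_divide power_mult)
    also have "x ^ (3 * s) = x ^ (2 * s) * x ^ s" by (simp add: power_add[symmetric])
    finally show ?thesis using x by simp
  qed
  also have "\<dots> \<le> 1 / x ^ 2"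
  proof -
    have s2: "2 \<le> s" unfolding s_def by simp
    have "x ^ 2 \<le> x ^ s" using x by (intro power_increasing[OF s2]) auto
    then show ?thesis using x by (intro divide_left_mono) auto
  qed
  finally show ?thesis .
qed



lemma per_m:
  fixes phi :: "nat \<Rightarrow> 'g::finite" and p :: "'g \<Rightarrow> 'g \<Rightarrow> real"
  assumes p01: "\<And>j k. 0 \<le> p j k \<and> p j k \<le> 1"
    and rb: "\<And>j k. 0 < p j k * p k j \<Longrightarrow> 1 - p j k * p k j \<le> r"
    and r: "0 < r" "r < 1" and m: "m \<ge> 2"
    and D: "D = real (CARD('g) * CARD('g)) * (3 / (- ln r)) + 4 * real (CARD('g) * CARD('g)) + 2"
  shows "1 - 1 / real m ^ 2 \<le> measure_pmf.prob (random_digraph m phi p)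
              {A. real (nu {0..<m} (mutual_graph A)) \<le> D * ln (real m)}"
    and "measure_pmf.expectation (random_digraph m phi p)
         (\<lambda>A. real (nu {0..<m} (mutual_graph A))) \<le> D * ln (real m)"
proof -
  let ?M = "random_digraph m phi p"
  define x where "x = real m"
  define L where "L = ln x"
  define c where "c = - ln r"
  define G where "G = CARD('g) * CARD('g)"
  define s where "s = nat \<lceil>3 * ln x / (- ln r)\<rceil> + 2"
  define T where "T = G * (s - 1)"
  define B where "B = {A. T < nu {0..<m} (mutual_graph A)}"
  have x2: "2 \<le> x" unfolding x_def using m by simp
  have L2: "1/2 \<le> L" unfolding L_def by (rule ln_ge_half[OF x2])
  have c: "0 < c" unfolding c_def using r by simp
  have s1: "s \<ge> 1" unfolding s_def by simp
  have "measure_pmf.prob ?M B \<le> real m ^ (2 * s) * r ^ (s * (s - 1))"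
    unfolding B_def T_def G_def using tail[where p=p and phi=phi, OF p01 rb _ s1] r by simp
  also have "\<dots> \<le> 1 / x ^ 2"
    using arith_bound[OF x2 r s_def] unfolding x_def .
  finally have PB: "measure_pmf.prob ?M B \<le> 1 / x ^ 2" .
  have "real (s - 1) = real (nat \<lceil>3 * L / c\<rceil>) + 1"
    unfolding s_def L_def c_def by simp
  also have "\<dots> \<le> 3 * L / c + 2"
  proof -
    have "0 \<le> 3 * L / c" using L2 c by simp
    then have "real (nat \<lceil>3 * L / c\<rceil>) = real_of_int \<lceil>3 * L / c\<rceil>" by simp
    also have "\<dots> \<le> 3 * L / c + 1" by linarith
    finally show ?thesis by simp
  qed
  finally have sb: "real (s - 1) \<le> 3 * L / c + 2" .
  have TD: "real T + 1 \<le> D * L"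
  proof -
    have G0: "0 \<le> real G" by simp
    have "real T = real G * real (s - 1)" unfolding T_def by simp
    also have "\<dots> \<le> real G * (3 * L / c + 2)" by (rule mult_left_mono[OF sb G0])
    also have "\<dots> = real G * (3 / c) * L + 2 * real G" by (simp add: algebra_simps)
    finally have "real T \<le> real G * (3 / c) * L + 2 * real G" .
    moreover have "2 * real G \<le> 4 * real G * L"
    proof -
      have "real G * 2 \<le> real G * (4 * L)" using L2 G0 by (intro mult_left_mono) auto
      then show ?thesis by (simp add: algebra_simps)
    qed
    moreover have "1 \<le> 2 * L" using L2 by simp
    moreover have "D * L = real G * (3 / c) * L + 4 * real G * L + 2 * L"
      unfolding D G_def c_def by (simp add: algebra_simps)
    ultimately show ?thesis by linarith
  qed
  have comp: "UNIV - B \<subseteq> {A. real (nu {0..<m} (mutual_graph A)) \<le> D * ln (real m)}"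
  proof
    fix A assume "A \<in> UNIV - B"
    then have "nu {0..<m} (mutual_graph A) \<le> T" unfolding B_def by simp
    then have "real (nu {0..<m} (mutual_graph A)) \<le> real T" by simp
    then show "A \<in> {A. real (nu {0..<m} (mutual_graph A)) \<le> D * ln (real m)}"
      using TD unfolding L_def x_def by simp
  qed
  have "1 - 1 / real m ^ 2 \<le> 1 - measure_pmf.prob ?M B" using PB unfolding x_def by simp
  also have "\<dots> = measure_pmf.prob ?M (UNIV - B)"
    using measure_pmf.prob_compl[of B ?M] by simp
  also have "\<dots> \<le> measure_pmf.prob ?M {A. real (nu {0..<m} (mutual_graph A)) \<le> D * ln (real m)}"
    by (rule measure_pmf.finite_measure_mono[OF comp]) simp
  finally show "1 - 1 / real m ^ 2 \<le> measure_pmf.prob ?M {A. real (nu {0..<m} (mutual_graph A)) \<le> D * ln (real m)}" .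
  define f where "f = (\<lambda>A. real (nu {0..<m} (mutual_graph A)))"
  define g where "g = (\<lambda>A. real T + x * indicator B A)"
  have fg: "f A \<le> g A" for A
  proof (cases "A \<in> B")
    case True
    have "f A \<le> x" unfolding f_def x_def using nu_facts(1) by simp
    then show ?thesis unfolding g_def using True by simp
  next
    case False
    then show ?thesis unfolding f_def g_def B_def by simp
  qed
  have intf: "integrable ?M f"
  proof (rule measure_pmf.integrable_const_bound[where B=x])
    show "AE A in ?M. norm (f A) \<le> x" unfolding f_def x_def using nu_facts(1) by simp
  qed simp
  have intg: "integrable ?M g"
  proof (rule measure_pmf.integrable_const_bound[where B="real T + x"])
    show "AE A in ?M. norm (g A) \<le> real T + x" unfolding g_def using x2
      by (auto simp: indicator_def)
  qed simp
  have "measure_pmf.expectation ?M f \<le> measure_pmf.expectation ?M g"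
    by (rule integral_mono[OF intf intg fg])
  also have "measure_pmf.expectation ?M g = real T + x * measure_pmf.prob ?M B"
  proof -
    have "integrable ?M (\<lambda>A. x * indicator B A)"
    proof (rule measure_pmf.integrable_const_bound[where B=x])
      show "AE A in ?M. norm (x * indicator B A) \<le> x" using x2 by (auto simp: indicator_def)
    qed simp
    have "measure_pmf.expectation ?M g = measure_pmf.expectation ?M (\<lambda>A. real T) + measure_pmf.expectation ?M (\<lambda>A. x * indicator B A)"
      unfolding g_def by (rule Bochner_Integration.integral_add) (simp, fact)
    also have "measure_pmf.expectation ?M (\<lambda>A. x * indicator B A) = x * measure_pmf.expectation ?M (indicator B)"
      by (rule Bochner_Integration.integral_mult_right_zero)
    finally show ?thesis by simp
  qed
  also have "\<dots> \<le> real T + x * (1 / x ^ 2)"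
    using PB x2 by (intro add_left_mono mult_left_mono) auto
  also have "\<dots> \<le> real T + 1"
    using x2 by (simp add: power2_eq_square field_simps)
  also have "\<dots> \<le> D * ln (real m)" using TD unfolding L_def x_def .
  finally show "measure_pmf.expectation ?M (\<lambda>A. real (nu {0..<m} (mutual_graph A))) \<le> D * ln (real m)"
    unfolding f_def .
qed

theorem mainTheorem6:
  fixes p :: "'g::finite \<Rightarrow> 'g \<Rightarrow> real"
  assumes "\<And>j k. 0 \<le> p j k \<and> p j k \<le> 1"
  shows "\<exists>D>0.
    (\<forall>m\<ge>2. \<forall>phi :: nat \<Rightarrow> 'g.
       measure_pmf.expectation (random_digraph m phi p)
         (\<lambda>A. real (nu {0..<m} (mutual_graph A))) \<le> D * ln (real m)) \<and>
    (\<forall>phis :: nat \<Rightarrow> nat \<Rightarrow> 'g.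
       (\<lambda>m. measure_pmf.prob (random_digraph m (phis m) p)
              {A. real (nu {0..<m} (mutual_graph A)) \<le> D * ln (real m)}) \<longlonglongrightarrow> 1)"
proof -
  note p01 = assms
  define R where "R = insert (1/2) ((\<lambda>(j,k). 1 - p j k * p k j) ` {(j,k). 0 < p j k * p k j})"
  define r where "r = Max R"
  have finR: "finite R" unfolding R_def by simp
  have rin: "r \<in> R" unfolding r_def using finR by (intro Max_in) (auto simp: R_def)
  have r0: "0 < r"
  proof -
    have "1/2 \<le> r" unfolding r_def using finR by (intro Max_ge) (auto simp: R_def)
    then show ?thesis by simp
  qed
  have r1: "r < 1" using rin unfolding R_def by auto
  have rb: "1 - p j k * p k j \<le> r" if "0 < p j k * p k j" for j k
    unfolding r_def using finR that by (intro Max_ge) (auto simp: R_def)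
  define D where "D = real (CARD('g) * CARD('g)) * (3 / (- ln r)) + 4 * real (CARD('g) * CARD('g)) + 2"
  have c: "0 < - ln r" using r0 r1 by simp
  have D0: "D > 0"
  proof -
    have "0 \<le> real (CARD('g) * CARD('g)) * (3 / (- ln r))" using c by (intro mult_nonneg_nonneg) auto
    moreover have "0 \<le> 4 * real (CARD('g) * CARD('g))" by simp
    ultimately show ?thesis unfolding D_def by linarith
  qed
  have E: "\<forall>m\<ge>2. \<forall>phi :: nat \<Rightarrow> 'g.
       measure_pmf.expectation (random_digraph m phi p)
         (\<lambda>A. real (nu {0..<m} (mutual_graph A))) \<le> D * ln (real m)"
    using per_m(2)[where p=p, OF p01 rb r0 r1 _ D_def] by blast
  have P: "(\<lambda>m. measure_pmf.prob (random_digraph m (phis m) p)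
              {A. real (nu {0..<m} (mutual_graph A)) \<le> D * ln (real m)}) \<longlonglongrightarrow> 1"
    for phis :: "nat \<Rightarrow> nat \<Rightarrow> 'g"
  proof (rule tendsto_sandwich)
    show "\<forall>\<^sub>F m in sequentially. 1 - inverse (real m) \<le> measure_pmf.prob (random_digraph m (phis m) p)
              {A. real (nu {0..<m} (mutual_graph A)) \<le> D * ln (real m)}"
    proof (rule eventually_sequentiallyI[of 2])
      fix m :: nat assume m: "2 \<le> m"
      have "1 - inverse (real m) \<le> 1 - 1 / real m ^ 2"
      proof -
        have "1 / real m ^ 2 \<le> 1 / real m" using m
          by (intro divide_left_mono) (auto simp: power2_eq_square)
        then show ?thesis by (simp add: inverse_eq_divide)
      qed
      also have "\<dots> \<le> measure_pmf.prob (random_digraph m (phis m) p)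
              {A. real (nu {0..<m} (mutual_graph A)) \<le> D * ln (real m)}"
        by (rule per_m(1)[where p=p and phi="phis m", OF p01 rb r0 r1 m D_def])
      finally show "1 - inverse (real m) \<le> measure_pmf.prob (random_digraph m (phis m) p)
              {A. real (nu {0..<m} (mutual_graph A)) \<le> D * ln (real m)}" .
    qed
    show "\<forall>\<^sub>F m in sequentially. measure_pmf.prob (random_digraph m (phis m) p)
              {A. real (nu {0..<m} (mutual_graph A)) \<le> D * ln (real m)} \<le> 1"
      by simp
    show "(\<lambda>m. 1 - inverse (real m)) \<longlonglongrightarrow> 1"
      using tendsto_diff[OF tendsto_const lim_inverse_n, of "1::real"] by simp
    show "(\<lambda>m. 1::real) \<longlonglongrightarrow> 1" by simp
  qed
  show ?thesis using D0 E P by blast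
qed

end
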